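(* Let $X$ be a nonempty set, let $n\geq 1$, and let $f_1,\dots,f_n:X\to\mathbb{R}$ be arbitrary functions. Then there exists $(\lambda_1,\dots,\lambda_n)\in S_n$ such that \[ 0\leq \lambda_1 f_1(x)+\dots+\lambda_n f_n(x)\qquad (x\in X) \] if and only if \[ 0\leq \max_{i\in\{1,\dots,n\}}\big(t_1 f_i(x_1)+\dots+t_n f_i(x_n)\big)\qquad (x_1,\dots,x_n\in X,\ (t_1,\dots,t_n)\in S_n). \]
   Context: For a positive integer $n$, $S_n$ denotes the simplex $\{(\lambda_1,\dots,\lambda_n)\in\mathbb{R}^n \mid \lambda_1,\dots,\lambda_n\geq 0,\ \lambda_1+\dots+\lambda_n=1\}$. *)

theory Defs
  imports Complex_Main
begin

text \<open>The simplex S_n, with vectors in R^n represented as functions nat => real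
  indexed by 0..n-1 (entries at indices >= n fixed to 0).\<close>
definition simplex :: "nat \<Rightarrow> (nat \<Rightarrow> real) set" where
  "simplex n = {l. (\<forall>i<n. 0 \<le> l i) \<and> (\<forall>i\<ge>n. l i = 0) \<and> (\<Sum>i<n. l i) = 1}"

end

theory Submission
  imports Defs "HOL-Homology.Simplices"
begin

lemma lin_dep:
  fixes v :: "nat \<Rightarrow> nat \<Rightarrow> real"
  shows "finite K \<Longrightarrow> card K > n \<Longrightarrow>
    \<exists>\<mu>. (\<exists>k\<in>K. \<mu> k \<noteq> 0) \<and> (\<forall>i<n. (\<Sum>k\<in>K. \<mu> k * v k i) = 0)"
proof (induction n arbitrary: K v)
  case 0
  then obtain k where "k \<in> K" by (metis card.empty ex_in_conv less_irrefl)
  then show ?case by (intro exI[of _ "\<lambda>_. 1"]) auto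
next
  case (Suc n)
  show ?case
  proof (cases "\<forall>k\<in>K. v k n = 0")
    case True
    from Suc.IH[of K v] Suc.prems obtain \<mu> where
      m: "\<exists>k\<in>K. \<mu> k \<noteq> 0" "\<forall>i<n. (\<Sum>k\<in>K. \<mu> k * v k i) = 0" by auto
    show ?thesis
    proof (intro exI[of _ \<mu>] conjI allI impI)
      fix i assume "i < Suc n"
      then consider "i < n" | "i = n" by linarith
      then show "(\<Sum>k\<in>K. \<mu> k * v k i) = 0" using m True by cases auto
    qed (use m in auto)
  next
    case False
    then obtain j where j: "j \<in> K" "v j n \<noteq> 0" by auto
    define K' where "K' = K - {j}"
    define w where "w k i = v k i - (v k n / v j n) * v j i" for k i
    have fK': "finite K'" using Suc.prems K'_def by auto
    have cK': "card K' > n" using Suc.prems j K'_def by auto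
    from Suc.IH[OF fK' cK', of w] obtain \<nu> where
      nu: "\<exists>k\<in>K'. \<nu> k \<noteq> 0" "\<forall>i<n. (\<Sum>k\<in>K'. \<nu> k * w k i) = 0" by auto
    define S where "S = (\<Sum>k\<in>K'. \<nu> k * v k n)"
    define \<mu> where "\<mu> k = (if k = j then - (S / v j n) else \<nu> k)" for k
    have split: "(\<Sum>k\<in>K. \<mu> k * v k i) = - (S / v j n) * v j i + (\<Sum>k\<in>K'. \<nu> k * v k i)" for i
    proof -
      have "(\<Sum>k\<in>K. \<mu> k * v k i) = \<mu> j * v j i + (\<Sum>k\<in>K'. \<mu> k * v k i)"
        using Suc.prems(1) j K'_def by (simp add: sum.remove)
      also have "(\<Sum>k\<in>K'. \<mu> k * v k i) = (\<Sum>k\<in>K'. \<nu> k * v k i)"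
        by (rule sum.cong) (auto simp: \<mu>_def K'_def)
      finally show ?thesis by (simp add: \<mu>_def)
    qed
    show ?thesis
    proof (intro exI[of _ \<mu>] conjI allI impI)
      show "\<exists>k\<in>K. \<mu> k \<noteq> 0" using nu(1) by (auto simp: \<mu>_def K'_def)
    next
      fix i assume "i < Suc n"
      then consider "i < n" | "i = n" by linarith
      then show "(\<Sum>k\<in>K. \<mu> k * v k i) = 0"
      proof cases
        case 1
        have "0 = (\<Sum>k\<in>K'. \<nu> k * w k i)" using nu(2) 1 by simp
        also have "\<dots> = (\<Sum>k\<in>K'. \<nu> k * v k i) - (S / v j n) * v j i"
          by (simp add: w_def S_def algebra_simps sum_subtractf sum_distrib_left sum_divide_distrib sum_distrib_right)
        finally show ?thesis using split by simp
      next
        case 2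
        then show ?thesis using split j by (simp add: S_def)
      qed
    qed
  qed
qed

lemma carath:
  fixes v :: "nat \<Rightarrow> nat \<Rightarrow> real"
  assumes "n \<ge> 1"
  shows "finite K \<Longrightarrow> (\<forall>k\<in>K. 0 \<le> t k) \<Longrightarrow> (\<Sum>k\<in>K. t k) = 1 \<Longrightarrow>
    (\<forall>i<n. (\<Sum>k\<in>K. t k * v k i) < 0) \<Longrightarrow>
    \<exists>K' t'. K' \<subseteq> K \<and> card K' \<le> n \<and> (\<forall>k\<in>K'. 0 \<le> t' k) \<and> (\<Sum>k\<in>K'. t' k) = 1 \<and>
      (\<forall>i<n. (\<Sum>k\<in>K'. t' k * v k i) < 0)"
proof (induction "card K" arbitrary: K t rule: less_induct)
  case less
  show ?case
  proof (cases "card K \<le> n")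
    case True
    then show ?thesis using less.prems by blast
  next
    case False
    then obtain \<mu>0 where m0: "\<exists>k\<in>K. \<mu>0 k \<noteq> 0" "\<forall>i<n. (\<Sum>k\<in>K. \<mu>0 k * v k i) = 0"
      using lin_dep[OF less.prems(1), of n v] by auto
    obtain \<mu> where m: "\<exists>k\<in>K. \<mu> k < 0" "\<forall>i<n. (\<Sum>k\<in>K. \<mu> k * v k i) = 0"
    proof (cases "\<exists>k\<in>K. \<mu>0 k < 0")
      case True
      then show ?thesis using that m0 by blast
    next
      case False
      then have "\<exists>k\<in>K. (- \<mu>0) k < 0" using m0(1) by force
      moreover have "\<forall>i<n. (\<Sum>k\<in>K. (- \<mu>0) k * v k i) = 0"
        using m0(2) by (simp add: sum_negf)
      ultimately show ?thesis using that by blast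
    qed
    define R where "R = {k\<in>K. \<mu> k < 0}"
    have fR: "finite R" "R \<noteq> {}" using less.prems(1) m(1) R_def by auto
    define s where "s = Min ((\<lambda>k. t k / (- \<mu> k)) ` R)"
    have "s \<in> (\<lambda>k. t k / (- \<mu> k)) ` R"
      unfolding s_def using fR by (intro Min_in) auto
    then obtain j where j: "j \<in> R" "s = t j / (- \<mu> j)" by blast
    have sle: "s \<le> t k / (- \<mu> k)" if "k \<in> R" for k
      using fR that s_def by simp
    have s0: "s \<ge> 0"
    proof -
      have "t j \<ge> 0" "- \<mu> j > 0" using j less.prems(2) R_def by auto
      then show ?thesis using j(2) by (simp only: divide_nonneg_pos)
    qed
    define \<tau> where "\<tau> k = t k + s * \<mu> k" for k
    have tau0: "\<tau> k \<ge> 0" if "k \<in> K" for k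
    proof (cases "\<mu> k < 0")
      case True
      then have "s \<le> t k / (- \<mu> k)" using sle that R_def by auto
      moreover have "0 < - \<mu> k" using True by simp
      ultimately have "s * (- \<mu> k) \<le> t k" using pos_le_divide_eq by blast
      then show ?thesis by (simp add: \<tau>_def)
    next
      case False
      then show ?thesis using s0 less.prems(2) that by (simp add: \<tau>_def)
    qed
    have tauj: "\<tau> j = 0"
    proof -
      have "\<mu> j \<noteq> 0" using j R_def by auto
      then show ?thesis using j(2) by (simp add: \<tau>_def)
    qed
    have tauv: "(\<Sum>k\<in>K. \<tau> k * v k i) = (\<Sum>k\<in>K. t k * v k i)" if "i < n" for i
    proof -
      have "(\<Sum>k\<in>K. \<tau> k * v k i) = (\<Sum>k\<in>K. t k * v k i + s * (\<mu> k * v k i))"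
        by (rule sum.cong) (simp_all add: \<tau>_def distrib_right)
      also have "\<dots> = (\<Sum>k\<in>K. t k * v k i) + s * (\<Sum>k\<in>K. \<mu> k * v k i)"
        by (simp add: sum.distrib sum_distrib_left)
      finally have "(\<Sum>k\<in>K. \<tau> k * v k i) = (\<Sum>k\<in>K. t k * v k i) + s * (\<Sum>k\<in>K. \<mu> k * v k i)" .
      then show ?thesis using m(2) that by simp
    qed
    define S where "S = (\<Sum>k\<in>K. \<tau> k)"
    have Spos: "S > 0"
    proof (rule ccontr)
      assume "\<not> S > 0"
      moreover have "S \<ge> 0" unfolding S_def by (rule sum_nonneg) (use tau0 in auto)
      ultimately have "S = 0" by linarith
      then have "\<forall>k\<in>K. \<tau> k = 0" using sum_nonneg_eq_0_iff[of K \<tau>] less.prems(1) tau0 unfolding S_def by blast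
      then have z: "(\<Sum>k\<in>K. \<tau> k * v k 0) = 0" by simp
      have n0: "0 < n" using assms by simp
      then have "(\<Sum>k\<in>K. t k * v k 0) < 0" using less.prems(4) by blast
      then show False using z tauv[OF n0] by simp
    qed
    define K' where "K' = K - {j}"
    define t' where "t' k = \<tau> k / S" for k
    have jK: "j \<in> K" using j R_def by auto
    have cK: "card K' < card K" using jK less.prems(1) K'_def by (metis card_Diff1_less)
    have sumK': "(\<Sum>k\<in>K'. g k) = (\<Sum>k\<in>K. g k)" if "g j = 0" for g :: "nat \<Rightarrow> real"
      using that jK less.prems(1) K'_def by (simp add: sum.remove)
    have p1: "\<forall>k\<in>K'. 0 \<le> t' k" using tau0 Spos K'_def t'_def by auto
    have p2: "(\<Sum>k\<in>K'. t' k) = 1"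
    proof -
      have "(\<Sum>k\<in>K'. t' k) = (\<Sum>k\<in>K. t' k)" using sumK'[of t'] tauj by (simp add: t'_def)
      also have "\<dots> = S / S" unfolding t'_def S_def by (rule sum_divide_distrib[symmetric])
      also have "\<dots> = 1" using Spos by simp
      finally show ?thesis .
    qed
    have p3: "\<forall>i<n. (\<Sum>k\<in>K'. t' k * v k i) < 0"
    proof (intro allI impI)
      fix i assume i: "i < n"
      have "(\<Sum>k\<in>K'. t' k * v k i) = (\<Sum>k\<in>K. t' k * v k i)"
        using sumK'[of "\<lambda>k. t' k * v k i"] tauj by (simp add: t'_def)
      also have "\<dots> = (\<Sum>k\<in>K. \<tau> k * v k i) / S"
        unfolding t'_def by (simp add: sum_divide_distrib)
      finally show "(\<Sum>k\<in>K'. t' k * v k i) < 0"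
        using tauv[OF i] less.prems(4) i Spos divide_neg_pos by metis
    qed
    have fK': "finite K'" using less.prems(1) K'_def by simp
    have "K' \<subseteq> K" using K'_def by auto
    with less.hyps[OF cK fK' p1 p2 p3] show ?thesis by (meson subset_trans)
  qed
qed

lemma sq_ineq:
  fixes a d s :: real
  shows "(max (a + s * d) 0)^2 \<le> (max a 0 + s * d)^2"
proof (cases "a + s * d \<le> 0")
  case True
  then show ?thesis by simp
next
  case False
  then have "a + s * d \<le> max a 0 + s * d" "0 \<le> a + s * d" by auto
  then have "(a + s * d)^2 \<le> (max a 0 + s * d)^2" by (rule power_mono)
  then show ?thesis using False by simp
qed

lemma gordan_fin:
  fixes w :: "nat \<Rightarrow> nat \<Rightarrow> real"
  assumes n1: "n \<ge> 1" and m1: "m \<ge> 1"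
  and H: "\<forall>t\<in>standard_simplex (m-1). \<not> (\<forall>i<n. (\<Sum>k<m. t k * w k i) \<le> 0)"
  shows "\<exists>l\<in>simplex n. \<forall>k<m. 0 \<le> (\<Sum>i<n. l i * w k i)"
proof -
  define c where "c t i = (\<Sum>k<m. t k * w k i)" for t :: "nat \<Rightarrow> real" and i
  define \<phi> where "\<phi> t = (\<Sum>i<n. (max (c t i) 0)^2)" for t
  have cont: "continuous_map (powertop_real UNIV) euclideanreal \<phi>"
    unfolding \<phi>_def c_def by (intro continuous_intros) auto
  have "compactin euclideanreal (\<phi> ` standard_simplex (m-1))"
    by (rule image_compactin[OF compactin_standard_simplex cont])
  then have "compact (\<phi> ` standard_simplex (m-1))" by simp
  moreover have "\<phi> ` standard_simplex (m-1) \<noteq> {}" using nonempty_standard_simplex by blast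
  ultimately obtain y where "y \<in> \<phi> ` standard_simplex (m-1)" "\<forall>z\<in>\<phi> ` standard_simplex (m-1). y \<le> z"
    using compact_attains_inf by blast
  then obtain t0 where t0: "t0 \<in> standard_simplex (m-1)" and tmin: "\<And>t. t \<in> standard_simplex (m-1) \<Longrightarrow> \<phi> t0 \<le> \<phi> t"
    by blast
  define p where "p i = max (c t0 i) 0" for i
  have p0: "p i \<ge> 0" for i by (simp add: p_def)
  from H t0 obtain i0 where i0: "i0 < n" "c t0 i0 > 0" by (force simp: c_def)
  have Ppos: "(\<Sum>i<n. p i) > 0"
  proof -
    have "p i0 > 0" using i0 by (simp add: p_def)
    moreover have "p i0 \<le> (\<Sum>i<n. p i)"
      using i0 p0 by (intro member_le_sum) auto
    ultimately show ?thesis by linarith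
  qed
  have var: "0 \<le> (\<Sum>i<n. p i * (w k i - c t0 i))" if k: "k < m" for k
  proof (rule ccontr)
    define d where "d i = w k i - c t0 i" for i
    define P where "P = (\<Sum>i<n. p i * d i)"
    define D where "D = (\<Sum>i<n. (d i)^2)"
    assume "\<not> 0 \<le> (\<Sum>i<n. p i * (w k i - c t0 i))"
    then have Pneg: "P < 0" by (simp add: P_def d_def)
    have key: "0 \<le> 2 * P + s * D" if s: "0 < s" "s \<le> 1" for s
    proof -
      define ts where "ts q = (1 - s) * t0 q + (if q = k then s else 0)" for q
      have ts: "ts \<in> standard_simplex (m-1)"
      proof -
        have "0 \<le> ts q \<and> ts q \<le> 1" for q
        proof -
          have "0 \<le> t0 q" "t0 q \<le> 1" using t0 by (auto simp: standard_simplex_def)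
          then have "(1 - s) * t0 q \<le> 1 - s" "0 \<le> (1 - s) * t0 q" using s
            by (auto intro: mult_left_le)
          then show ?thesis using s by (auto simp: ts_def)
        qed
        moreover have "ts q = 0" if "q > m - 1" for q
          using t0 that k by (auto simp: standard_simplex_def ts_def)
        moreover have "(\<Sum>q\<le>m-1. ts q) = 1"
        proof -
          have "(\<Sum>q\<le>m-1. ts q) = (1 - s) * (\<Sum>q\<le>m-1. t0 q) + (\<Sum>q\<le>m-1. (if q = k then s else 0))"
            by (simp add: ts_def sum.distrib sum_distrib_left)
          also have "(\<Sum>q\<le>m-1. t0 q) = 1" using t0 by (simp add: standard_simplex_def)
          also have "(\<Sum>q\<le>m-1. (if q = k then s else 0::real)) = s" using k by auto
          finally show ?thesis by simp
        qed
        ultimately show ?thesis by (simp add: standard_simplex_def)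
      qed
      have cts: "c ts i = c t0 i + s * d i" for i
      proof -
        have "c ts i = (\<Sum>q<m. (1 - s) * (t0 q * w q i) + (if q = k then s * w k i else 0))"
          unfolding c_def ts_def by (rule sum.cong) (auto simp: algebra_simps)
        also have "\<dots> = (1 - s) * c t0 i + (\<Sum>q<m. (if q = k then s * w k i else 0))"
          by (simp add: c_def sum.distrib sum_distrib_left)
        also have "(\<Sum>q<m. (if q = k then s * w k i else 0)) = s * w k i" using k by simp
        finally show ?thesis by (simp add: d_def algebra_simps)
      qed
      have "\<phi> t0 \<le> \<phi> ts" using tmin ts by blast
      also have "\<phi> ts \<le> (\<Sum>i<n. (p i + s * d i)^2)"
        unfolding \<phi>_def cts p_def by (intro sum_mono sq_ineq)
      also have "\<dots> = \<phi> t0 + 2 * s * P + s^2 * D"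
      proof -
        have "(\<Sum>i<n. (p i + s * d i)^2) = (\<Sum>i<n. (p i)^2 + 2 * s * (p i * d i) + s^2 * (d i)^2)"
          by (rule sum.cong) (auto simp: power2_eq_square algebra_simps)
        also have "\<dots> = (\<Sum>i<n. (p i)^2) + 2 * s * P + s^2 * D"
          by (simp add: sum.distrib sum_distrib_left P_def D_def)
        finally show ?thesis by (simp add: \<phi>_def p_def)
      qed
      finally have "0 \<le> s * (2 * P + s * D)" by (simp add: power2_eq_square algebra_simps)
      then show ?thesis using s by (simp add: zero_le_mult_iff)
    qed
    have D0: "D \<ge> 0" unfolding D_def by (intro sum_nonneg) auto
    show False
    proof (cases "D = 0")
      case True
      then show False using key[of 1] Pneg by simp
    next
      case False
      then have Dp: "D > 0" using D0 by simp
      define s where "s = min 1 (- P / D)"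
      have s: "0 < s" "s \<le> 1" using Pneg Dp by (auto simp: s_def divide_neg_pos)
      have "s * D \<le> - P" using Dp by (simp add: s_def min_def pos_le_divide_eq field_simps split: if_splits)
      then show False using key[OF s] Pneg by linarith
    qed
  qed
  define l where "l i = (if i < n then p i / (\<Sum>i<n. p i) else 0)" for i
  have "l \<in> simplex n"
    unfolding simplex_def l_def using Ppos p0
    by (auto simp: sum_divide_distrib[symmetric])
  moreover have "0 \<le> (\<Sum>i<n. l i * w k i)" if k: "k < m" for k
  proof -
    have pc: "p i * c t0 i = (p i)^2" for i by (simp add: p_def power2_eq_square max_def)
    have "(\<Sum>i<n. p i * w k i) = (\<Sum>i<n. p i * (w k i - c t0 i)) + (\<Sum>i<n. p i * c t0 i)"
      by (simp add: algebra_simps sum.distrib sum_subtractf)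
    also have "\<dots> \<ge> 0" using var[OF k] by (simp add: pc sum_nonneg)
    finally have "0 \<le> (\<Sum>i<n. p i * w k i)" .
    moreover have "(\<Sum>i<n. l i * w k i) = (\<Sum>i<n. p i * w k i) / (\<Sum>i<n. p i)"
      by (simp add: l_def sum_divide_distrib)
    ultimately show ?thesis using Ppos by simp
  qed
  ultimately show ?thesis by blast
qed

lemma simplex_eq: "n \<ge> 1 \<Longrightarrow> simplex n = standard_simplex (n-1)"
proof -
  assume n: "n \<ge> 1"
  have iv: "{..n-1} = {..<n}" using n by auto
  have le1: "l i \<le> 1" if "l \<in> simplex n" for l i
  proof (cases "i < n")
    case True
    have "l i \<le> (\<Sum>i<n. l i)" using that True by (intro member_le_sum) (auto simp: simplex_def)
    then show ?thesis using that by (simp add: simplex_def)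
  next
    case False
    then show ?thesis using that by (simp add: simplex_def)
  qed
  have gt: "(i > n - 1) = (i \<ge> n)" for i using n by auto
  show ?thesis
  proof
    show "simplex n \<subseteq> standard_simplex (n - 1)"
    proof
      fix l assume l: "l \<in> simplex n"
      have "0 \<le> l i" for i using l by (cases "i < n") (auto simp: simplex_def)
      then show "l \<in> standard_simplex (n - 1)"
        using l le1[OF l] unfolding standard_simplex_def iv gt by (auto simp: simplex_def)
    qed
  next
    show "standard_simplex (n - 1) \<subseteq> simplex n"
      unfolding standard_simplex_def iv gt simplex_def by auto
  qed
qed

theorem theorem2p2:
  fixes X :: "'a set" and n :: nat and f :: "nat \<Rightarrow> 'a \<Rightarrow> real"
  assumes "X \<noteq> {}" and "n \<ge> 1"
  shows "(\<exists>l\<in>simplex n. \<forall>x\<in>X. 0 \<le> (\<Sum>j<n. l j * f j x))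
     \<longleftrightarrow> (\<forall>xs. (\<forall>k<n. xs k \<in> X) \<longrightarrow> (\<forall>t\<in>simplex n.
            0 \<le> Max ((\<lambda>i. \<Sum>k<n. t k * f i (xs k)) ` {..<n})))"
proof
  assume "\<exists>l\<in>simplex n. \<forall>x\<in>X. 0 \<le> (\<Sum>j<n. l j * f j x)"
  then obtain l where l: "l \<in> simplex n" "\<forall>x\<in>X. 0 \<le> (\<Sum>j<n. l j * f j x)" by blast
  show "\<forall>xs. (\<forall>k<n. xs k \<in> X) \<longrightarrow> (\<forall>t\<in>simplex n.
            0 \<le> Max ((\<lambda>i. \<Sum>k<n. t k * f i (xs k)) ` {..<n}))"
  proof (intro allI impI ballI)
    fix xs t assume xs: "\<forall>k<n. xs k \<in> X" and t: "t \<in> simplex n"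
    define a where "a i = (\<Sum>k<n. t k * f i (xs k))" for i
    define M where "M = Max (a ` {..<n})"
    have aM: "a i \<le> M" if "i < n" for i using that by (simp add: M_def)
    have "(\<Sum>i<n. l i * a i) = (\<Sum>i<n. \<Sum>k<n. l i * (t k * f i (xs k)))"
      by (simp add: a_def sum_distrib_left)
    also have "\<dots> = (\<Sum>k<n. \<Sum>i<n. l i * (t k * f i (xs k)))" by (rule sum.swap)
    also have "\<dots> = (\<Sum>k<n. t k * (\<Sum>i<n. l i * f i (xs k)))"
      by (simp add: sum_distrib_left mult.left_commute)
    also have "\<dots> \<ge> 0"
    proof (rule sum_nonneg)
      fix k assume "k \<in> {..<n}"
      then show "0 \<le> t k * (\<Sum>i<n. l i * f i (xs k))"
        using t xs l(2) by (intro mult_nonneg_nonneg) (auto simp: simplex_def)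
    qed
    finally have "0 \<le> (\<Sum>i<n. l i * a i)" .
    also have "\<dots> \<le> (\<Sum>i<n. l i * M)"
      using l(1) aM by (intro sum_mono mult_left_mono) (auto simp: simplex_def)
    also have "\<dots> = M" using l(1) by (simp add: simplex_def sum_distrib_right[symmetric])
    finally show "0 \<le> Max ((\<lambda>i. \<Sum>k<n. t k * f i (xs k)) ` {..<n})" by (simp add: M_def a_def)
  qed
next
  assume H: "\<forall>xs. (\<forall>k<n. xs k \<in> X) \<longrightarrow> (\<forall>t\<in>simplex n.
            0 \<le> Max ((\<lambda>i. \<Sum>k<n. t k * f i (xs k)) ` {..<n}))"
  obtain x0 where x0: "x0 \<in> X" using assms(1) by blast
  have n1: "n \<ge> 1" by fact
  have step1: "\<not> (\<forall>i<n. (\<Sum>k\<in>K. t k * f i (xs k)) < 0)"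
    if K: "finite K" "\<forall>k\<in>K. xs k \<in> X" "\<forall>k\<in>K. 0 \<le> t k" "(\<Sum>k\<in>K. t k) = 1" for K :: "nat set" and t :: "nat \<Rightarrow> real" and xs :: "nat \<Rightarrow> 'a"
  proof
    assume neg: "\<forall>i<n. (\<Sum>k\<in>K. t k * f i (xs k)) < 0"
    from carath[OF n1, of K t "\<lambda>k i. f i (xs k)"] K neg
    obtain K' t' where K': "K' \<subseteq> K" "card K' \<le> n" "\<forall>k\<in>K'. 0 \<le> t' k" "(\<Sum>k\<in>K'. t' k) = 1"
      "\<forall>i<n. (\<Sum>k\<in>K'. t' k * f i (xs k)) < 0" by blast
    have fK': "finite K'" using K'(1) K(1) finite_subset by blast
    obtain g where g: "bij_betw g {0..<card K'} K'" using ex_bij_betw_nat_finite[OF fK'] by blast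
    have g': "bij_betw g {..<card K'} K'" using g by (simp add: atLeast0LessThan)
    define xs' where "xs' q = (if q < card K' then xs (g q) else x0)" for q
    define tt where "tt q = (if q < card K' then t' (g q) else 0)" for q
    have gin: "g q \<in> K'" if "q < card K'" for q using g' that bij_betwE by blast
    have sumred: "(\<Sum>q<n. F q) = (\<Sum>k\<in>K'. G k)"
      if "\<And>q. q \<ge> card K' \<Longrightarrow> F q = 0" "\<And>q. q < card K' \<Longrightarrow> F q = G (g q)" for F G :: "nat \<Rightarrow> real"
    proof -
      have "(\<Sum>q<n. F q) = (\<Sum>q<card K'. F q)"
        using K'(2) that(1) by (intro sum.mono_neutral_right) auto
      also have "\<dots> = (\<Sum>q<card K'. G (g q))" using that(2) by simp
      also have "\<dots> = (\<Sum>k\<in>K'. G k)" by (rule sum.reindex_bij_betw[OF g'])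
      finally show ?thesis .
    qed
    have xs': "\<forall>k<n. xs' k \<in> X" using gin K'(1) K(2) x0 by (auto simp: xs'_def)
    have "(\<Sum>q<n. tt q) = (\<Sum>k\<in>K'. t' k)" by (rule sumred) (auto simp: tt_def)
    then have tt: "tt \<in> simplex n"
      unfolding simplex_def using K'(2,3,4) gin by (auto simp: tt_def)
    have M0: "0 \<le> Max ((\<lambda>i. \<Sum>k<n. tt k * f i (xs' k)) ` {..<n})"
      using spec[OF H, of xs'] xs' tt by blast
    have ne: "{..<n} \<noteq> {}" using n1 by (simp add: lessThan_empty_iff)
    have "Max ((\<lambda>i. \<Sum>k<n. tt k * f i (xs' k)) ` {..<n}) \<in> (\<lambda>i. \<Sum>k<n. tt k * f i (xs' k)) ` {..<n}"
      by (rule Max_in) (use ne in auto)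
    then obtain i where i1: "i < n" and i2: "Max ((\<lambda>i. \<Sum>k<n. tt k * f i (xs' k)) ` {..<n}) = (\<Sum>k<n. tt k * f i (xs' k))"
      by auto
    have "(\<Sum>k<n. tt k * f i (xs' k)) = (\<Sum>k\<in>K'. t' k * f i (xs k))"
      by (rule sumred) (auto simp: tt_def xs'_def)
    moreover have "(\<Sum>k\<in>K'. t' k * f i (xs k)) < 0" using K'(5) i1 by blast
    ultimately show False using M0 i2 by linarith
  qed
  have step2: "\<exists>l\<in>simplex n. \<forall>x\<in>F. -e \<le> (\<Sum>j<n. l j * f j x)"
    if F: "finite F" "F \<subseteq> X" and e: "e > 0" for F e
  proof (cases "F = {}")
    case True
    have "(\<lambda>i. if i = 0 then 1 else 0) \<in> simplex n" using n1 by (auto simp: simplex_def)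
    then show ?thesis using True by blast
  next
    case False
    define m where "m = card F"
    have m1: "m \<ge> 1" using False F(1) by (simp add: m_def Suc_le_eq card_gt_0_iff)
    obtain g where g: "bij_betw g {0..<m} F" using ex_bij_betw_nat_finite[OF F(1)] m_def by blast
    have gX: "g k \<in> X" if "k < m" for k using g that F(2) bij_betwE by fastforce
    define w where "w k i = f i (g k) + e" for k i
    have Hw: "\<forall>t\<in>standard_simplex (m-1). \<not> (\<forall>i<n. (\<Sum>k<m. t k * w k i) \<le> 0)"
    proof (intro ballI notI)
      fix t assume t: "t \<in> standard_simplex (m-1)" and le: "\<forall>i<n. (\<Sum>k<m. t k * w k i) \<le> 0"
      have iv: "{..m-1} = {..<m}" using m1 by auto
      have st: "(\<Sum>k<m. t k) = 1" using t unfolding standard_simplex_def iv by blast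
      have "\<forall>i<n. (\<Sum>k\<in>{..<m}. t k * f i (g k)) < 0"
      proof (intro allI impI)
        fix i assume "i < n"
        then have "(\<Sum>k<m. t k * w k i) \<le> 0" using le by blast
        moreover have "(\<Sum>k<m. t k * w k i) = (\<Sum>k<m. t k * f i (g k)) + e * (\<Sum>k<m. t k)"
          by (simp add: w_def algebra_simps sum.distrib sum_distrib_left)
        ultimately show "(\<Sum>k\<in>{..<m}. t k * f i (g k)) < 0" using st e by simp
      qed
      moreover have "\<forall>k\<in>{..<m}. 0 \<le> t k" using t by (simp add: standard_simplex_def)
      ultimately show False using step1[of "{..<m}" g t] gX st by auto
    qed
    obtain l where l: "l \<in> simplex n" "\<forall>k<m. 0 \<le> (\<Sum>i<n. l i * w k i)"
      using gordan_fin[OF n1 m1 Hw] by blast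
    have "\<forall>x\<in>F. -e \<le> (\<Sum>j<n. l j * f j x)"
    proof
      fix x assume "x \<in> F"
      then obtain k where k: "k < m" "x = g k" using g by (auto simp: bij_betw_def)
      have "(\<Sum>i<n. l i * w k i) = (\<Sum>i<n. l i * f i x) + e * (\<Sum>i<n. l i)"
        by (simp add: w_def k algebra_simps sum.distrib sum_distrib_left)
      also have "(\<Sum>i<n. l i) = 1" using l(1) by (simp add: simplex_def)
      finally show "-e \<le> (\<Sum>j<n. l j * f j x)" using l(2) k by fastforce
    qed
    then show ?thesis using l(1) by blast
  qed
  define A where "A = (\<lambda>(x, e). {l :: nat \<Rightarrow> real. -e \<le> (\<Sum>j<n. l j * f j x)})"
  define U where "U = A ` (X \<times> {e. e > 0})"
  have comp: "compactin (powertop_real UNIV) (simplex n)"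
    using simplex_eq[OF n1] compactin_standard_simplex by simp
  have closed: "closedin (powertop_real UNIV) C" if "C \<in> U" for C
  proof -
    obtain x e where C: "C = {l :: nat \<Rightarrow> real. -e \<le> (\<Sum>j<n. l j * f j x)}"
      using \<open>C \<in> U\<close> by (auto simp: U_def A_def)
    have cont: "continuous_map (powertop_real UNIV) euclideanreal (\<lambda>l. \<Sum>j<n. l j * f j x)"
      by (intro continuous_intros) auto
    have "closedin (powertop_real UNIV) {l \<in> topspace (powertop_real UNIV). (\<Sum>j<n. l j * f j x) \<in> {-e..}}"
      by (rule closedin_continuous_map_preimage[OF cont]) simp
    then show ?thesis by (simp add: C)
  qed
  have fip: "simplex n \<inter> \<Inter>\<F> \<noteq> {}" if Ff: "finite \<F>" "\<F> \<subseteq> U" for \<F>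
  proof -
    obtain C where C: "C \<subseteq> X \<times> {e. e > 0}" "finite C" "\<F> = A ` C"
      using finite_subset_image[OF Ff(1) Ff(2)[unfolded U_def]] by blast
    define e0 where "e0 = (if C = {} then 1 else Min (snd ` C))"
    have e0: "e0 > 0"
    proof (cases "C = {}")
      case True then show ?thesis by (simp add: e0_def)
    next
      case False
      have "\<forall>a\<in>snd ` C. 0 < a" using C(1) by auto
      then show ?thesis using False Min_gr_iff[OF finite_imageI[OF C(2)], of snd 0] by (simp add: e0_def)
    qed
    have e0le: "e0 \<le> e" if "(x, e) \<in> C" for x e
    proof -
      have em: "e \<in> snd ` C" using that by force
      have "C \<noteq> {}" using that by auto
      then show ?thesis using Min_le[OF finite_imageI[OF C(2)] em] by (simp add: e0_def)
    qed
    obtain l where l: "l \<in> simplex n" "\<forall>x\<in>fst ` C. -e0 \<le> (\<Sum>j<n. l j * f j x)"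
    proof -
      have "fst ` C \<subseteq> X" using C(1) by auto
      moreover have "finite (fst ` C)" using C(2) by simp
      ultimately show ?thesis using step2[of "fst ` C" e0] e0 that by blast
    qed
    have "l \<in> \<Inter>\<F>"
    proof
      fix D assume "D \<in> \<F>"
      then obtain x e where xe: "(x, e) \<in> C" "D = A (x, e)" using C(3) by auto
      have "-e0 \<le> (\<Sum>j<n. l j * f j x)" using l(2) xe(1) by force
      then show "l \<in> D" using xe e0le[OF xe(1)] by (simp add: A_def)
    qed
    then show ?thesis using l(1) by blast
  qed
  from comp[unfolded compactin_fip] have
    "\<forall>\<U>. (\<forall>C\<in>\<U>. closedin (powertop_real UNIV) C) \<and> (\<forall>\<F>. finite \<F> \<and> \<F> \<subseteq> \<U> \<longrightarrow> simplex n \<inter> \<Inter>\<F> \<noteq> {}) \<longrightarrow> simplex n \<inter> \<Inter>\<U> \<noteq> {}"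
    by (rule conjunct2)
  then have cf: "(\<forall>C\<in>U. closedin (powertop_real UNIV) C) \<and> (\<forall>\<F>. finite \<F> \<and> \<F> \<subseteq> U \<longrightarrow> simplex n \<inter> \<Inter>\<F> \<noteq> {}) \<longrightarrow> simplex n \<inter> \<Inter>U \<noteq> {}"
    by (rule spec)
  have "simplex n \<inter> \<Inter>U \<noteq> {}"
    by (rule mp[OF cf]) (use closed fip in blast)
  then obtain l where l: "l \<in> simplex n" "l \<in> \<Inter>U" by blast
  have "0 \<le> (\<Sum>j<n. l j * f j x)" if x: "x \<in> X" for x
  proof (rule ccontr)
    assume "\<not> 0 \<le> (\<Sum>j<n. l j * f j x)"
    then have neg: "(\<Sum>j<n. l j * f j x) < 0" by simp
    define e where "e = - (\<Sum>j<n. l j * f j x) / 2"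
    have "e > 0" using neg by (simp add: e_def)
    then have "A (x, e) \<in> U" using x by (auto simp: U_def)
    then have "l \<in> A (x, e)" using l(2) by blast
    then have "-e \<le> (\<Sum>j<n. l j * f j x)" by (simp add: A_def)
    then show False using neg by (simp add: e_def)
  qed
  then show "\<exists>l\<in>simplex n. \<forall>x\<in>X. 0 \<le> (\<Sum>j<n. l j * f j x)" using l(1) by blast
qed

end
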